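(* Let $Q(z)$ be a complex cubic polynomial with three distinct roots $a_1,a_2,a_3$, and for $i\in\{1,2,3\}$ let $\mathcal C_{Q_i}(z)=\int\frac{dM_i(\xi)}{z-\xi}$ be the Cauchy transform of the measure $M_i$. Then for each $i$, outside the ellipse $E_i$ (i.e. on the complement of the closed elliptic domain $\tilde E_i$), $\mathcal C_{Q_i}$ satisfies the linear non-homogeneous differential equation $$Q(z)\mathcal C''_{Q_i}(z)+Q'(z)\mathcal C'_{Q_i}(z)+\frac{Q''(z)}{8}\mathcal C_{Q_i}(z)+\frac{Q'''(z)}{24}=0 .$$
   Context: For $i\in\{1,2,3\}$ let $j,k$ be the other two indices. $E_i$ is the ellipse with foci $a_j,a_k$ passing through $a_i$, and $\tilde E_i$ the closed elliptic domain it bounds. Write $Q(z)=c\big((z-a_i)^3+v_i(z-a_i)^2+w_i(z-a_i)\big)$ with $c\neq0$. For distinct $\alpha_1,\alpha_2\in\mathbb C$, the arcsine measure $\omega_{[\alpha_1,\alpha_2]}$ is the probability measure supported on the segment $[\alpha_1,\alpha_2]$ with density $\frac{1}{\pi\sqrt{|(t-\alpha_1)(t-\alpha_2)|}}$ with respect to arclength. With $\xi(\theta)=a_i-v_i\theta^2$ and $\psi(\theta)=-w_i(1-\theta^2)\theta^2$, $M_i=\int_0^1\omega_{[\xi(\theta)-2\sqrt{\psi(\theta)},\,\xi(\theta)+2\sqrt{\psi(\theta)}]}\,d\theta$. *)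

theory Defs
  imports "HOL-Analysis.Analysis" "HOL-Computational_Algebra.Polynomial"
begin

text \<open>Arcsine measure on the segment from al1 to al2: the probability measure with density
  1/(pi sqrt(|t-al1| |t-al2|)) w.r.t. arclength on the segment. Parametrizing
  t = al1 + s (al2 - al1), s in (0,1), arclength is |al2-al1| ds, and the density becomes
  1/(pi sqrt(s(1-s))) ds; we push this measure on (0,1) forward to the plane.\<close>
definition arcsine_measure :: "complex \<Rightarrow> complex \<Rightarrow> complex measure" where
  "arcsine_measure al1 al2 =
     distr (density lborel (\<lambda>s::real. ennreal (indicator {0<..<1} s / (pi * sqrt (s * (1 - s))))))
           borel (\<lambda>s. al1 + of_real s * (al2 - al1))"

definition mixture_measure :: "(real \<Rightarrow> complex measure) \<Rightarrow> complex measure" where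
  "mixture_measure om =
     measure_of UNIV (sets borel)
       (\<lambda>A. \<integral>\<^sup>+ \<theta>. indicator {0..1} \<theta> * emeasure (om \<theta>) A \<partial>lborel)"

definition M_meas :: "complex \<Rightarrow> complex \<Rightarrow> complex \<Rightarrow> complex measure" where
  "M_meas a v w =
     mixture_measure (\<lambda>\<theta>.
        let xi = a - v * (of_real \<theta>)\<^sup>2;
            psi = - w * (1 - (of_real \<theta>)\<^sup>2) * (of_real \<theta>)\<^sup>2
        in arcsine_measure (xi - 2 * csqrt psi) (xi + 2 * csqrt psi))"

definition cauchy_transform :: "complex measure \<Rightarrow> complex \<Rightarrow> complex" where
  "cauchy_transform M z = (\<integral> \<xi>. 1 / (z - \<xi>) \<partial>M)"

end

theory Submission
  imports Defs
begin



lemma cmod_parallelogram: "cmod (x + y)^2 + cmod (x - y)^2 = 2 * (cmod x ^2 + cmod y^2)"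
  unfolding cmod_power2 by (simp add: power2_eq_square algebra_simps)

lemma ellipse_sum:
  fixes X Y f :: complex and c0 s0 :: real
  assumes cs: "c0^2 + s0^2 = 1" and ff: "f^2 = X^2 + Y^2"
  shows "cmod (X * c0 + Y * s0 - f) + cmod (X * c0 + Y * s0 + f) = cmod (X + \<i> * Y) + cmod (X - \<i> * Y)"
proof -
  define \<alpha> where "\<alpha> = X + \<i> * Y"
  define \<gamma> where "\<gamma> = X - \<i> * Y"
  define ra where "ra = csqrt \<alpha>"
  define rg where "rg = csqrt \<gamma>"
  define \<omega> where "\<omega> = csqrt (Complex c0 s0)"
  have om2: "\<omega>^2 = Complex c0 s0" by (simp add: \<omega>_def)
  have "cmod (Complex c0 s0) = 1" using cs by (simp add: cmod_def)
  hence cm2: "cmod \<omega> ^ 2 = 1" by (metis norm_power om2)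
  hence cm1: "cmod \<omega> = 1" using norm_ge_zero[of \<omega>] by (auto simp: power2_eq_1_iff)
  from cm2 have omc: "\<omega> * cnj \<omega> = 1"
    by (metis complex_norm_square mult.commute of_real_1)
  have om2': "(cnj \<omega>)^2 = Complex c0 (-s0)" by (metis complex_cnj_power om2 complex_cnj)
  define q1 where "q1 = ra * cnj \<omega>"
  define q2 where "q2 = rg * \<omega>"
  have q12: "q1 * q2 = ra * rg" using omc by (simp add: q1_def q2_def algebra_simps)
  have e: "X * c0 + Y * s0 = (\<alpha> * (cnj \<omega>)^2 + \<gamma> * \<omega>^2) / 2"
    unfolding om2 om2' \<alpha>_def \<gamma>_def
    by (simp add: complex_eq_iff algebra_simps)
  have ra2: "ra^2 = \<alpha>" and rg2: "rg^2 = \<gamma>" by (simp_all add: ra_def rg_def)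
  have sq1: "(\<alpha> * (cnj \<omega>)^2 + \<gamma> * \<omega>^2) / 2 + ra*rg = (q1 + q2)^2 / 2"
  proof -
    have "(q1 + q2)^2 / 2 = (ra^2 * (cnj \<omega>)^2 + rg^2 * \<omega>^2) / 2 + ra*rg*(\<omega> * cnj \<omega>)"
      unfolding q1_def q2_def by (simp add: power2_eq_square field_simps)
    thus ?thesis using omc ra2 rg2 by simp
  qed
  have sq2: "(\<alpha> * (cnj \<omega>)^2 + \<gamma> * \<omega>^2) / 2 - ra*rg = (q1 - q2)^2 / 2"
  proof -
    have "(q1 - q2)^2 / 2 = (ra^2 * (cnj \<omega>)^2 + rg^2 * \<omega>^2) / 2 - ra*rg*(\<omega> * cnj \<omega>)"
      unfolding q1_def q2_def by (simp add: power2_eq_square field_simps)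
    thus ?thesis using omc ra2 rg2 by simp
  qed
  have nq1: "cmod q1 ^ 2 = cmod \<alpha>"
  proof -
    have "cmod (cnj \<omega>) = 1" using cm1 by simp
    thus ?thesis unfolding q1_def by (simp add: norm_mult power_mult_distrib ra_def norm_power[symmetric] del: norm_power)
  qed
  have nq2: "cmod q2 ^ 2 = cmod \<gamma>"
  proof -
    have "cmod \<omega> = 1" using cm1 by simp
    thus ?thesis unfolding q2_def by (simp add: norm_mult power_mult_distrib rg_def norm_power[symmetric] del: norm_power)
  qed
  have sum: "cmod ((q1+q2)^2/2) + cmod ((q1-q2)^2/2) = cmod \<alpha> + cmod \<gamma>"
    using cmod_parallelogram[of q1 q2] nq1 nq2 by (simp add: norm_power norm_divide)
  have "(ra*rg)^2 = \<alpha> * \<gamma>" using ra2 rg2 by (simp add: power_mult_distrib)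
  also have "\<dots> = f^2" using ff by (simp add: \<alpha>_def \<gamma>_def algebra_simps power2_eq_square)
  finally have "(ra*rg)^2 = f^2" .
  hence "ra*rg = f \<or> ra*rg = -f" by (simp add: power2_eq_iff)
  thus ?thesis
  proof
    assume h: "ra*rg = f"
    have 1: "X * c0 + Y * s0 - f = (q1 - q2)^2 / 2" using sq2 by (simp only: e h diff_conv_add_uminus minus_minus)
    have 2: "X * c0 + Y * s0 + f = (q1 + q2)^2 / 2" using sq1 by (simp only: e h diff_conv_add_uminus minus_minus)
    show ?thesis unfolding 1 2 using sum by (simp add: \<alpha>_def \<gamma>_def add.commute)
  next
    assume h: "ra*rg = -f"
    have 1: "X * c0 + Y * s0 - f = (q1 + q2)^2 / 2" using sq1 by (simp only: e h diff_conv_add_uminus minus_minus)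
    have 2: "X * c0 + Y * s0 + f = (q1 - q2)^2 / 2" using sq2 by (simp only: e h diff_conv_add_uminus minus_minus)
    show ?thesis unfolding 1 2 using sum by (simp add: \<alpha>_def \<gamma>_def)
  qed
qed

definition bet :: "real \<Rightarrow> real" where "bet \<theta> = 2 * \<theta> * sqrt (1 - \<theta>^2)"
definition pt :: "complex \<Rightarrow> complex \<Rightarrow> complex \<Rightarrow> real \<Rightarrow> real \<Rightarrow> complex" where
  "pt a v w \<theta> t = a - v * (of_real \<theta>)^2 - of_real (bet \<theta> * cos t) * csqrt(-w)"

lemma cvx_norm: fixes p q :: complex assumes "0 \<le> l" "l \<le> 1"
  shows "cmod (of_real l * p + of_real (1-l) * q) \<le> l * cmod p + (1-l) * cmod q"
proof -
  have "cmod (of_real l * p + of_real (1-l) * q) \<le> cmod (of_real l * p) + cmod (of_real (1-l) * q)"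
    by (rule norm_triangle_ineq)
  also have "\<dots> = l * cmod p + (1-l) * cmod q" using assms
    by (simp only: norm_mult norm_of_real)
  finally show ?thesis .
qed

lemma pt_in_ellipse:
  assumes v: "v = -(b + d)" and w: "w = b*d" and th: "0 \<le> \<theta>" "\<theta> \<le> 1"
  shows "cmod (pt a v w \<theta> t - (a+b)) + cmod (pt a v w \<theta> t - (a+d)) \<le> cmod b + cmod d"
proof -
  define m where "m = csqrt (-w)"
  define X where "X = v/2"
  define Y where "Y = -m"
  define f where "f = (b-d)/2"
  define c0 where "c0 = 1 - 2*\<theta>^2"
  define s0 where "s0 = bet \<theta>"
  define l where "l = (1 + cos t)/2"
  have m2: "m^2 = -w" by (simp add: m_def)
  have ff: "f^2 = X^2 + Y^2" unfolding f_def X_def Y_def power_mult_distrib[symmetric] 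
    using m2 by (simp add: v w power2_eq_square field_simps)
  have sq: "sqrt (1-\<theta>^2) ^ 2 = 1 - \<theta>^2" using th by (simp add: power_le_one)
  have cs: "c0^2 + s0^2 = 1" unfolding c0_def s0_def bet_def
    by (simp add: power_mult_distrib sq) (simp add: power2_eq_square algebra_simps)
  have cs': "c0^2 + (-s0)^2 = 1" using cs by simp
  have h1: "0 \<le> 1 + cos t" using cos_ge_minus_one[of t] by linarith
  have h2: "1 + cos t \<le> 2" using cos_le_one[of t] by linarith
  have l01: "0 \<le> l" "l \<le> 1" unfolding l_def using h1 h2 by simp_all
  define ep where "ep = X * c0 + Y * s0"
  define em where "em = X * c0 + Y * (-s0)"
  have E: "pt a v w \<theta> t - (a + (b+d)/2) = of_real l * ep + of_real (1-l) * em"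
    unfolding pt_def ep_def em_def l_def X_def Y_def c0_def s0_def m_def
    by (simp add: v field_simps)
  have S1: "cmod (ep - f) + cmod (ep + f) = cmod (X + \<i> * Y) + cmod (X - \<i> * Y)"
    unfolding ep_def by (rule ellipse_sum[OF cs ff])
  have S2: "cmod (em - f) + cmod (em + f) = cmod (X + \<i> * Y) + cmod (X - \<i> * Y)"
    unfolding em_def using ellipse_sum[OF cs' ff] by simp
  have S0: "cmod (X * 1 + Y * 0 - f) + cmod (X * 1 + Y * 0 + f) = cmod (X + \<i> * Y) + cmod (X - \<i> * Y)"
    using ellipse_sum[of 1 0 f X Y] ff by simp
  have Xb: "X - f = -b" "X + f = -d" unfolding X_def f_def v by (simp_all add: field_simps)
  have S: "cmod (X + \<i> * Y) + cmod (X - \<i> * Y) = cmod b + cmod d" using S0 Xb by simp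
  have e1: "pt a v w \<theta> t - (a+b) = of_real l * (ep - f) + of_real (1-l) * (em - f)"
  proof -
    have "of_real l * (ep - f) + of_real (1-l) * (em - f) = (of_real l * ep + of_real (1-l) * em) - f"
      unfolding of_real_diff of_real_1 by algebra
    also have "\<dots> = pt a v w \<theta> t - (a+b)" unfolding E[symmetric] f_def by (simp add: field_simps)
    finally show ?thesis by simp
  qed
  have e2: "pt a v w \<theta> t - (a+d) = of_real l * (ep + f) + of_real (1-l) * (em + f)"
  proof -
    have "of_real l * (ep + f) + of_real (1-l) * (em + f) = (of_real l * ep + of_real (1-l) * em) + f"
      unfolding of_real_diff of_real_1 by algebra
    also have "\<dots> = pt a v w \<theta> t - (a+d)" unfolding E[symmetric] f_def by (simp add: field_simps)
    finally show ?thesis by simp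
  qed
  have "cmod (pt a v w \<theta> t - (a+b)) + cmod (pt a v w \<theta> t - (a+d)) \<le>
      (l * cmod (ep - f) + (1-l) * cmod (em - f)) + (l * cmod (ep + f) + (1-l) * cmod (em + f))"
    unfolding e1 e2 by (intro add_mono cvx_norm l01)
  also have "\<dots> = l * (cmod (ep - f) + cmod (ep + f)) + (1-l) * (cmod (em - f) + cmod (em + f))"
    by (simp add: algebra_simps)
  also have "\<dots> = cmod b + cmod d" unfolding S1 S2 S by (simp add: algebra_simps)
  finally show ?thesis .
qed




definition kk :: "complex \<Rightarrow> complex \<Rightarrow> complex \<Rightarrow> complex \<Rightarrow> real \<Rightarrow> real \<Rightarrow> complex" where
  "kk a v w z \<theta> t = 1 / (z - pt a v w \<theta> t)"
definition II :: "complex \<Rightarrow> complex \<Rightarrow> complex \<Rightarrow> nat \<Rightarrow> complex \<Rightarrow> real \<Rightarrow> complex" where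
  "II a v w n z \<theta> = integral {0..pi} (\<lambda>t. kk a v w z \<theta> t ^ n)"
definition JJ :: "complex \<Rightarrow> complex \<Rightarrow> complex \<Rightarrow> nat \<Rightarrow> complex \<Rightarrow> complex" where
  "JJ a v w n z = integral {0..1} (\<lambda>\<theta>. II a v w n z \<theta>)"

lemma continuous_on_pt:
  fixes S :: "'a::t2_space set"
  assumes "continuous_on S T" "continuous_on S R"
  shows "continuous_on S (\<lambda>x. pt a v w (T x) (R x))"
  unfolding pt_def bet_def by (intro continuous_intros assms)

lemma continuous_on_kk:
  fixes S :: "'a::t2_space set"
  assumes "continuous_on S Z" "continuous_on S T" "continuous_on S R"
    and "\<And>x. x \<in> S \<Longrightarrow> Z x \<noteq> pt a v w (T x) (R x)"
  shows "continuous_on S (\<lambda>x. kk a v w (Z x) (T x) (R x) ^ n)"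
  unfolding kk_def using assms by (intro continuous_intros continuous_on_pt) auto

lemma deriv_inv_pow:
  fixes p z :: complex assumes "z \<noteq> p"
  shows "((\<lambda>z. (1 / (z - p)) ^ n) has_field_derivative (- of_nat n * (1 / (z - p)) ^ Suc n)) (at z within S)"
proof -
  have "((\<lambda>z. (1 / (z - p)) ^ n) has_field_derivative
        (of_nat n * (1 / (z - p)) ^ (n - 1) * (- 1 / (z - p)^2))) (at z within S)"
    using assms by (auto intro!: derivative_eq_intros simp: power2_eq_square)
  moreover have "of_nat n * (1 / (z - p)) ^ (n - 1) * (- 1 / (z - p)^2) = - of_nat n * (1 / (z - p)) ^ Suc n"
  proof (cases n)
    case 0 thus ?thesis by simp
  next
    case (Suc k)
    have "of_nat n * (1 / (z - p)) ^ (n - 1) * (- 1 / (z - p)^2) = - (of_nat n * ((1 / (z - p)) ^ k * (1 / (z - p)) * (1 / (z - p))))"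
      by (simp add: Suc power2_eq_square)
    also have "\<dots> = - of_nat n * (1 / (z - p)) ^ Suc n" by (simp only: Suc power_Suc2 mult_minus_left mult.assoc)
    finally show ?thesis .
  qed
  ultimately show ?thesis by simp
qed

locale good =
  fixes a v w :: complex and U :: "complex set"
  assumes openU: "open U"
    and nz: "\<And>z \<theta> t. z \<in> U \<Longrightarrow> 0 \<le> \<theta> \<Longrightarrow> \<theta> \<le> 1 \<Longrightarrow> z \<noteq> pt a v w \<theta> t"
begin

lemma nz': "pt a v w \<theta> t \<in> U \<Longrightarrow> 0 \<le> \<theta> \<Longrightarrow> \<theta> \<le> 1 \<Longrightarrow> False"
  using nz by blast

lemma cont_II: "continuous_on (U \<times> {0..1}) (\<lambda>(z, \<theta>). II a v w n z \<theta>)"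
proof -
  have "continuous_on ((U \<times> {0..1}) \<times> cbox 0 pi) (\<lambda>(x, t). kk a v w (fst x) (snd x) t ^ n)"
    unfolding case_prod_beta
    by (rule continuous_on_kk) (auto intro!: continuous_intros dest: nz')
  from integral_continuous_on_param[OF this] show ?thesis
    unfolding II_def by (simp add: case_prod_beta)
qed

lemma cont_II_theta: "z \<in> U \<Longrightarrow> continuous_on {0..1} (\<lambda>\<theta>. II a v w n z \<theta>)"
  by (rule continuous_on_compose2[OF cont_II, where f="\<lambda>\<theta>. (z, \<theta>)", simplified])
     (auto intro!: continuous_intros)

lemma has_deriv_II:
  assumes z: "z \<in> U" and th: "0 \<le> \<theta>" "\<theta> \<le> 1"
  shows "((\<lambda>z. II a v w n z \<theta>) has_field_derivative (- of_nat n * II a v w (Suc n) z \<theta>)) (at z)"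
proof -
  obtain e where e: "e > 0" "ball z e \<subseteq> U" using openU z openE by blast
  have "((\<lambda>z. integral (cbox 0 pi) (\<lambda>t. kk a v w z \<theta> t ^ n)) has_field_derivative
        integral (cbox 0 pi) (\<lambda>t. - of_nat n * kk a v w z \<theta> t ^ Suc n)) (at z within ball z e)"
  proof (rule leibniz_rule_field_derivative)
    fix x t assume "x \<in> ball z e" "t \<in> cbox 0 pi"
    hence "x \<in> U" using e by blast
    hence "x \<noteq> pt a v w \<theta> t" using nz th by blast
    thus "((\<lambda>x. kk a v w x \<theta> t ^ n) has_field_derivative - of_nat n * kk a v w x \<theta> t ^ Suc n) (at x within ball z e)"
      unfolding kk_def by (rule deriv_inv_pow)
  next
    fix x assume "x \<in> ball z e"
    hence "continuous_on (cbox 0 pi) (\<lambda>t. kk a v w x \<theta> t ^ n)"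
      using e th by (intro continuous_on_kk) (auto intro!: continuous_intros dest: nz')
    thus "(\<lambda>t. kk a v w x \<theta> t ^ n) integrable_on cbox 0 pi" by (rule integrable_continuous)
  next
    show "continuous_on (ball z e \<times> cbox 0 pi) (\<lambda>(x, t). - of_nat n * kk a v w x \<theta> t ^ Suc n)"
      unfolding case_prod_beta using e th
      by (intro continuous_intros continuous_on_kk) (auto intro!: continuous_intros dest: nz')
  qed (use e in auto)
  hence "((\<lambda>z. II a v w n z \<theta>) has_field_derivative (- of_nat n * II a v w (Suc n) z \<theta>)) (at z within ball z e)"
    unfolding II_def by simp
  moreover have "at z within ball z e = at z" by (rule at_within_open) (use e in auto)
  ultimately show ?thesis by metis
qed

lemma has_deriv_JJ:
  assumes z: "z \<in> U"
  shows "((\<lambda>z. JJ a v w n z) has_field_derivative (- of_nat n * JJ a v w (Suc n) z)) (at z)"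
proof -
  obtain e where e: "e > 0" "ball z e \<subseteq> U" using openU z openE by blast
  have "((\<lambda>z. integral (cbox 0 1) (\<lambda>\<theta>. II a v w n z \<theta>)) has_field_derivative
        integral (cbox 0 1) (\<lambda>\<theta>. - of_nat n * II a v w (Suc n) z \<theta>)) (at z within ball z e)"
  proof (rule leibniz_rule_field_derivative)
    fix x \<theta> assume "x \<in> ball z e" "\<theta> \<in> cbox (0::real) 1"
    hence "x \<in> U" "0 \<le> \<theta>" "\<theta> \<le> 1" using e by auto
    thus "((\<lambda>x. II a v w n x \<theta>) has_field_derivative - of_nat n * II a v w (Suc n) x \<theta>) (at x within ball z e)"
      by (rule has_field_derivative_at_within[OF has_deriv_II])
  next
    fix x assume "x \<in> ball z e"
    hence "x \<in> U" using e by auto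
    hence "continuous_on (cbox 0 1) (\<lambda>\<theta>. II a v w n x \<theta>)" using cont_II_theta by simp
    thus "(\<lambda>\<theta>. II a v w n x \<theta>) integrable_on cbox 0 1" by (rule integrable_continuous)
  next
    have c: "continuous_on (ball z e \<times> cbox 0 1) (\<lambda>(x, \<theta>). II a v w (Suc n) x \<theta>)"
      by (rule continuous_on_subset[OF cont_II]) (use e in auto)
    have "continuous_on (ball z e \<times> cbox 0 1) (\<lambda>p. - of_nat n * (\<lambda>(x, \<theta>). II a v w (Suc n) x \<theta>) p)"
      by (rule continuous_on_mult[OF continuous_on_const c])
    thus "continuous_on (ball z e \<times> cbox 0 1) (\<lambda>(x, \<theta>). - of_nat n * II a v w (Suc n) x \<theta>)"
      by (simp add: case_prod_beta)
  qed (use e in auto)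
  hence "((\<lambda>z. JJ a v w n z) has_field_derivative (- of_nat n * JJ a v w (Suc n) z)) (at z within ball z e)"
    unfolding JJ_def by simp
  moreover have "at z within ball z e = at z" by (rule at_within_open) (use e in auto)
  ultimately show ?thesis by metis
qed

end



lemma vd_inv:
  fixes f :: "real \<Rightarrow> complex"
  assumes "(f has_vector_derivative f') (at x)" "f x \<noteq> 0"
  shows "((\<lambda>t. 1 / f t) has_vector_derivative (- f' / (f x)^2)) (at x)"
proof -
  have "((\<lambda>w. 1 / w) has_field_derivative (- 1 / (f x)^2)) (at (f x))"
    using assms(2) by (auto intro!: derivative_eq_intros simp: power2_eq_square)
  from field_vector_diff_chain_at[OF assms(1) this] show ?thesis
    by (simp add: o_def)
qed

definition AA :: "complex \<Rightarrow> complex \<Rightarrow> complex \<Rightarrow> real \<Rightarrow> complex" where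
  "AA a v z \<theta> = (z - a) + v * (of_real \<theta>)^2"
definition BB :: "complex \<Rightarrow> real \<Rightarrow> complex" where
  "BB w \<theta> = of_real (bet \<theta>) * csqrt (-w)"

lemma z_minus_pt: "z - pt a v w \<theta> t = AA a v z \<theta> + BB w \<theta> * of_real (cos t)"
  unfolding pt_def AA_def BB_def by (simp add: algebra_simps)

lemma kk_alt: "kk a v w z \<theta> t = 1 / (AA a v z \<theta> + BB w \<theta> * of_real (cos t))"
  unfolding kk_def z_minus_pt ..

context good begin

lemma R1:
  assumes z: "z \<in> U" and th: "0 \<le> \<theta>" "\<theta> \<le> 1"
  shows "AA a v z \<theta> * II a v w 1 z \<theta> = (AA a v z \<theta>^2 - BB w \<theta>^2) * II a v w 2 z \<theta>"
proof -
  define A where "A = AA a v z \<theta>"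
  define B where "B = BB w \<theta>"
  define D where "D = (\<lambda>t. A + B * of_real (cos t))"
  have Dnz: "D t \<noteq> 0" for t using nz[OF z th, of t] unfolding D_def A_def B_def z_minus_pt[symmetric] by simp
  have kD: "kk a v w z \<theta> t = 1 / D t" for t unfolding kk_alt D_def A_def B_def ..
  define G where "G = (\<lambda>t. B * of_real (sin t) * (1 / D t))"
  have dD: "(D has_vector_derivative (B * of_real (- sin t))) (at t)" for t
    unfolding D_def by (auto intro!: derivative_eq_intros)
  have dG: "(G has_vector_derivative (A * (1 / D t) - (A^2 - B^2) * (1 / D t)^2)) (at t)" for t
  proof -
    have "(G has_vector_derivative (B * of_real (sin t) * (- (B * of_real (- sin t)) / (D t)^2)
             + B * of_real (cos t) * (1 / D t))) (at t)"
    proof -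
      have h1: "((\<lambda>t. B * of_real (sin t)) has_vector_derivative B * of_real (cos t)) (at t)"
        by (auto intro!: derivative_eq_intros)
      show ?thesis unfolding G_def by (rule has_vector_derivative_mult[OF h1 vd_inv[OF dD Dnz]])
    qed
    moreover have "B * of_real (sin t) * (- (B * of_real (- sin t)) / (D t)^2) + B * of_real (cos t) * (1 / D t)
        = A * (1 / D t) - (A^2 - B^2) * (1 / D t)^2"
    proof -
      have s: "(of_real (sin t))^2 = 1 - (of_real (cos t) :: complex)^2"
        by (metis of_real_1 of_real_diff of_real_power sin_squared_eq)
      have "B * of_real (sin t) * (- (B * of_real (- sin t)) / (D t)^2) + B * of_real (cos t) * (1 / D t)
          = (B^2 * (of_real (sin t))^2 + B * of_real (cos t) * D t) / (D t)^2"
        using Dnz[of t] by (simp add: field_simps power2_eq_square)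
      also have "\<dots> = (A * D t - (A^2 - B^2)) / (D t)^2"
        unfolding s D_def by (simp add: algebra_simps power2_eq_square)
      also have "\<dots> = A * (1 / D t) - (A^2 - B^2) * (1 / D t)^2"
        using Dnz[of t] by (simp add: field_simps power2_eq_square)
      finally show ?thesis .
    qed
    ultimately show ?thesis by simp
  qed
  have "((\<lambda>t. A * (1 / D t) - (A^2 - B^2) * (1 / D t)^2) has_integral (G pi - G 0)) {0..pi}"
    by (rule fundamental_theorem_of_calculus) (simp, rule has_vector_derivative_at_within[OF dG])
  hence hi: "((\<lambda>t. A * (1 / D t) - (A^2 - B^2) * (1 / D t)^2) has_integral 0) {0..pi}"
    unfolding G_def by simp
  have ci: "continuous_on {0..pi} (\<lambda>t. kk a v w z \<theta> t ^ n)" for n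
    using th nz[OF z th] by (intro continuous_on_kk) (auto intro!: continuous_intros)
  have i1: "(\<lambda>t. 1 / D t) integrable_on {0..pi}"
    using integrable_continuous_real[OF ci[of 1]] unfolding kD by simp
  have i2: "(\<lambda>t. (1 / D t)^2) integrable_on {0..pi}"
    using integrable_continuous_real[OF ci[of 2]] unfolding kD by simp
  have "integral {0..pi} (\<lambda>t. A * (1 / D t) - (A^2 - B^2) * (1 / D t)^2)
      = A * integral {0..pi} (\<lambda>t. 1 / D t) - (A^2 - B^2) * integral {0..pi} (\<lambda>t. (1 / D t)^2)"
    by (simp only: integral_diff[OF integrable_on_mult_right[OF i1] integrable_on_mult_right[OF i2]] integral_mult_right)
  hence "A * integral {0..pi} (\<lambda>t. 1 / D t) - (A^2 - B^2) * integral {0..pi} (\<lambda>t. (1 / D t)^2) = 0"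
    using integral_unique[OF hi] by simp
  thus ?thesis unfolding II_def kD A_def B_def by simp
qed

end

definition bet' :: "real \<Rightarrow> real" where "bet' \<theta> = 2 * sqrt (1 - \<theta>^2) - 2 * \<theta>^2 / sqrt (1 - \<theta>^2)"

lemma bet_deriv: assumes "-1 < \<theta>" "\<theta> < 1" shows "(bet has_real_derivative bet' \<theta>) (at \<theta>)"
proof -
  have p: "0 < 1 - \<theta>^2" using assms by (simp add: abs_square_less_1 abs_less_iff)
  have "((\<lambda>\<theta>. 2 * \<theta> * sqrt (1 - \<theta>^2)) has_real_derivative
      (2 * sqrt (1 - \<theta>^2) + 2 * \<theta> * (inverse (sqrt (1 - \<theta>^2)) / 2 * (- (2 * \<theta>))))) (at \<theta>)"
    using p by (auto intro!: derivative_eq_intros DERIV_real_sqrt simp: power2_eq_square)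
  moreover have "2 * sqrt (1 - \<theta>^2) + 2 * \<theta> * (inverse (sqrt (1 - \<theta>^2)) / 2 * (- (2 * \<theta>))) = bet' \<theta>"
    unfolding bet'_def by (simp add: field_simps power2_eq_square)
  ultimately show ?thesis unfolding bet_def[abs_def] by simp
qed

lemma cos_k2: fixes A B c D :: complex assumes "B*c = D - A" "D \<noteq> 0"
  shows "B*(c*(1/D)^2) = (1/D)^1 - A*(1/D)^2"
proof -
  have "B*(c*(1/D)^2) = (B*c)*(1/D)^2" by (simp add: algebra_simps)
  also have "\<dots> = (D - A) / D^2" unfolding assms(1) by (simp add: power2_eq_square)
  also have "\<dots> = (1/D)^1 - A*(1/D)^2" using assms(2) by (simp add: field_simps power2_eq_square)
  finally show ?thesis .
qed

context good begin

lemma ci_kk: assumes z: "z \<in> U" and th: "0 \<le> \<theta>" "\<theta> \<le> 1"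
  shows "continuous_on {0..pi} (\<lambda>t. kk a v w z \<theta> t ^ n)"
  using th nz[OF z th] by (intro continuous_on_kk) (auto intro!: continuous_intros)

lemma R_cos:
  assumes z: "z \<in> U" and th: "0 \<le> \<theta>" "\<theta> \<le> 1"
  shows "BB w \<theta> * integral {0..pi} (\<lambda>t. of_real (cos t) * kk a v w z \<theta> t ^ 2)
       = II a v w 1 z \<theta> - AA a v z \<theta> * II a v w 2 z \<theta>"
proof -
  have pw: "BB w \<theta> * (of_real (cos t) * kk a v w z \<theta> t ^ 2) = kk a v w z \<theta> t ^ 1 - AA a v z \<theta> * kk a v w z \<theta> t ^ 2" for t
  proof -
    have "AA a v z \<theta> + BB w \<theta> * of_real (cos t) \<noteq> 0" using nz[OF z th, of t] unfolding z_minus_pt[symmetric] by simp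
    thus ?thesis unfolding kk_alt by (intro cos_k2) simp_all
  qed
  have i1: "(\<lambda>t. kk a v w z \<theta> t ^ 1) integrable_on {0..pi}" by (rule integrable_continuous_real[OF ci_kk[OF z th]])
  have i2: "(\<lambda>t. kk a v w z \<theta> t ^ 2) integrable_on {0..pi}" by (rule integrable_continuous_real[OF ci_kk[OF z th]])
  have "BB w \<theta> * integral {0..pi} (\<lambda>t. of_real (cos t) * kk a v w z \<theta> t ^ 2)
      = integral {0..pi} (\<lambda>t. BB w \<theta> * (of_real (cos t) * kk a v w z \<theta> t ^ 2))"
    by (simp only: integral_mult_right)
  also have "\<dots> = integral {0..pi} (\<lambda>t. kk a v w z \<theta> t ^ 1 - AA a v z \<theta> * kk a v w z \<theta> t ^ 2)"
    unfolding pw ..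
  also have "\<dots> = II a v w 1 z \<theta> - AA a v z \<theta> * II a v w 2 z \<theta>"
    unfolding II_def by (simp only: integral_diff[OF i1 integrable_on_mult_right[OF i2]] integral_mult_right)
  finally show ?thesis .
qed

lemma R3:
  assumes z: "z \<in> U" and th: "0 < \<theta>" "\<theta> < 1"
  shows "((\<lambda>\<theta>. II a v w 1 z \<theta>) has_vector_derivative
     integral {0..pi} (\<lambda>t. - (v * (2 * of_real \<theta>) + of_real (bet' \<theta> * cos t) * csqrt (-w)) * kk a v w z \<theta> t ^ 2)) (at \<theta>)"
proof -
  let ?fx = "\<lambda>\<theta> t. - (v * (2 * of_real \<theta>) + of_real (bet' \<theta> * cos t) * csqrt (-w)) * kk a v w z \<theta> t ^ 2"
  have "((\<lambda>\<theta>. integral (cbox 0 pi) (\<lambda>t. kk a v w z \<theta> t ^ 1)) has_vector_derivative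
        integral (cbox 0 pi) (?fx \<theta>)) (at \<theta> within {0<..<1})"
  proof (rule leibniz_rule_vector_derivative)
    fix x t assume x: "x \<in> {0<..<(1::real)}" and t: "t \<in> cbox 0 pi"
    define D where "D = (\<lambda>x. z - pt a v w x t)"
    have D: "D = (\<lambda>x. (z - a) + v * of_real (x^2) + of_real (bet x * cos t) * csqrt (-w))"
      unfolding D_def pt_def by (auto simp: algebra_simps)
    have db: "(bet has_real_derivative bet' x) (at x)" using x by (intro bet_deriv) auto
    have h1: "((\<lambda>x. of_real (x^2) :: complex) has_vector_derivative of_real (2 * x)) (at x)"
      by (rule has_vector_derivative_of_real) (auto intro!: derivative_eq_intros)
    have h2: "((\<lambda>x. of_real (bet x * cos t) :: complex) has_vector_derivative of_real (bet' x * cos t)) (at x)"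
      by (rule has_vector_derivative_of_real) (auto intro!: derivative_eq_intros db)
    have "(D has_vector_derivative (0 + v * of_real (2 * x) + of_real (bet' x * cos t) * csqrt (-w))) (at x)"
      unfolding D by (intro has_vector_derivative_add has_vector_derivative_mult_right
          has_vector_derivative_mult_left has_vector_derivative_const h1 h2)
    hence dD0: "(D has_vector_derivative (v * of_real (2 * x) + of_real (bet' x * cos t) * csqrt (-w))) (at x)"
      by simp
    hence dD: "(D has_vector_derivative (v * (2 * of_real x) + of_real (bet' x * cos t) * csqrt (-w))) (at x)"
      by simp
    have "D x \<noteq> 0" unfolding D_def using nz[OF z, of x t] x by auto
    note vi = vd_inv[OF dD this]
    have e1: "(\<lambda>x. kk a v w z x t ^ 1) = (\<lambda>t. 1 / D t)" by (simp add: kk_def D_def fun_eq_iff)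
    have k1: "kk a v w z x t = 1 / D x" by (simp add: kk_def D_def)
    have e2: "?fx x t = - (v * (2 * of_real x) + of_real (bet' x * cos t) * csqrt (-w)) / (D x)^2"
      unfolding k1 by (simp add: power_divide)
    have "((\<lambda>x. kk a v w z x t ^ 1) has_vector_derivative ?fx x t) (at x)"
      unfolding e1 e2 by (rule vi)
    thus "((\<lambda>x. kk a v w z x t ^ 1) has_vector_derivative ?fx x t) (at x within {0<..<1})"
      by (rule has_vector_derivative_at_within)
  next
    fix x assume x: "x \<in> {0<..<(1::real)}"
    show "(\<lambda>t. kk a v w z x t ^ 1) integrable_on cbox 0 pi"
      using integrable_continuous_real[OF ci_kk[OF z, of x 1]] x by simp
  next
    have sq: "(fst x)^2 \<noteq> 1" if "x \<in> {0<..<(1::real)} \<times> cbox 0 pi" for x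
    proof -
      have "(fst x)^2 < 1" using that by (auto simp add: abs_square_less_1)
      thus ?thesis by simp
    qed
    have ck: "continuous_on ({0<..<1} \<times> cbox 0 pi) (\<lambda>p. kk a v w z (fst p) (snd p) ^ 2)"
    proof (rule continuous_on_kk)
      fix p assume "p \<in> {0<..<(1::real)} \<times> cbox 0 pi"
      hence "0 \<le> fst p" "fst p \<le> 1" by auto
      thus "z \<noteq> pt a v w (fst p) (snd p)" by (rule nz[OF z])
    qed (auto intro!: continuous_intros)
    have cb: "continuous_on ({0<..<1} \<times> cbox 0 pi) (\<lambda>p. - (v * (2 * of_real (fst p)) + of_real (bet' (fst p) * cos (snd p)) * csqrt (-w)))"
      unfolding bet'_def by (intro continuous_intros) (auto simp: power2_eq_1_iff)
    show "continuous_on ({0<..<1} \<times> cbox 0 pi) (\<lambda>(x, t). ?fx x t)"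
      using continuous_on_mult[OF cb ck] by (simp add: case_prod_beta)
  qed (use th in auto)
  moreover have "at \<theta> within {0<..<1} = at \<theta>" by (rule at_within_open) (use th in auto)
  ultimately show ?thesis unfolding II_def by simp
qed

end



definition PPp :: "complex \<Rightarrow> complex \<Rightarrow> complex \<Rightarrow> complex \<Rightarrow> complex \<Rightarrow> complex" where
  "PPp a v w z x = (z - a + v * x^2)^2 + 4 * w * x^2 * (1 - x^2)"

lemma bet_sq: "0 \<le> \<theta> \<Longrightarrow> \<theta> \<le> 1 \<Longrightarrow> (bet \<theta>)^2 = 4 * \<theta>^2 * (1 - \<theta>^2)"
  unfolding bet_def by (simp add: power_mult_distrib power_le_one)

lemma PP_eq: assumes "0 \<le> \<theta>" "\<theta> \<le> 1"
  shows "AA a v z \<theta>^2 - BB w \<theta>^2 = PPp a v w z (of_real \<theta>)"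
proof -
  have "BB w \<theta>^2 = of_real ((bet \<theta>)^2) * (-w)"
    unfolding BB_def by (simp add: power_mult_distrib)
  also have "\<dots> = - 4 * w * (of_real \<theta>)^2 * (1 - (of_real \<theta>)^2)"
    unfolding bet_sq[OF assms] by (simp add: algebra_simps)
  finally show ?thesis unfolding PPp_def AA_def by (simp add: algebra_simps)
qed

lemma alg_R2: fixes A P I1 I2 I3 :: complex
  assumes P: "P \<noteq> 0" and i2: "I2 = A*I1/P" and e: "I1 - A*I2 - (2*A*I2 - P*(2*I3)) = 0"
  shows "2*I3 = (3*A^2/P^2 - 1/P)*I1"
proof -
  have "P*(2*I3) = 3*A*I2 - I1" using e by (simp add: algebra_simps)
  hence "2*I3 = (3*A*I2 - I1)/P" using P by (simp add: field_simps)
  also have "\<dots> = (3*A^2/P^2 - 1/P)*I1" unfolding i2 using P by (simp add: field_simps power2_eq_square)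
  finally show ?thesis .
qed

context good begin

lemma PP_nz: assumes z: "z \<in> U" and th: "0 \<le> \<theta>" "\<theta> \<le> 1"
  shows "AA a v z \<theta>^2 - BB w \<theta>^2 \<noteq> 0"
proof -
  have "z - pt a v w \<theta> 0 \<noteq> 0" "z - pt a v w \<theta> pi \<noteq> 0" using nz[OF z th] by auto
  hence "(AA a v z \<theta> + BB w \<theta>) * (AA a v z \<theta> - BB w \<theta>) \<noteq> 0" unfolding z_minus_pt by simp
  thus ?thesis by (simp add: power2_eq_square algebra_simps)
qed

lemma R2: assumes z: "z \<in> U" and th: "0 \<le> \<theta>" "\<theta> \<le> 1"
  shows "2 * II a v w 3 z \<theta> = (3 * AA a v z \<theta>^2 / (AA a v z \<theta>^2 - BB w \<theta>^2)^2
           - 1 / (AA a v z \<theta>^2 - BB w \<theta>^2)) * II a v w 1 z \<theta>"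
proof -
  define g where "g = (\<lambda>z. AA a v z \<theta> * II a v w 1 z \<theta> - (AA a v z \<theta>^2 - BB w \<theta>^2) * II a v w 2 z \<theta>)"
  have dA: "((\<lambda>z. AA a v z \<theta>) has_field_derivative 1) (at z)"
    unfolding AA_def by (auto intro!: derivative_eq_intros)
  note d1 = has_deriv_II[OF z th, of 1]
  note d2 = has_deriv_II[OF z th, of 2]
  note dg = DERIV_diff[OF DERIV_mult[OF dA d1] DERIV_mult[OF DERIV_diff[OF DERIV_power[OF dA, of 2] DERIV_const[of "BB w \<theta>^2"]] d2]]
  have "((\<lambda>x. AA a v x \<theta> * II a v w 1 x \<theta> - ((AA a v x \<theta>)^2 - BB w \<theta>^2) * II a v w 2 x \<theta>) has_field_derivative 0) (at z)"
  proof (rule has_field_derivative_transform_within_open[OF DERIV_const openU z])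
    fix y assume "y \<in> U" thus "0 = AA a v y \<theta> * II a v w 1 y \<theta> - ((AA a v y \<theta>)^2 - BB w \<theta>^2) * II a v w 2 y \<theta>"
      using R1[OF _ th] by simp
  qed
  from DERIV_unique[OF dg this]
  have e: "1 * II a v w 1 z \<theta> - AA a v z \<theta> * II a v w 2 z \<theta> - (2 * AA a v z \<theta> * II a v w 2 z \<theta>
       - ((AA a v z \<theta>)^2 - BB w \<theta>^2) * (2 * II a v w 3 z \<theta>)) = 0"
    by (simp add: algebra_simps numeral_2_eq_2 numeral_3_eq_3)
  have r1: "II a v w 2 z \<theta> = AA a v z \<theta> * II a v w 1 z \<theta> / (AA a v z \<theta>^2 - BB w \<theta>^2)"
    using R1[OF z th] PP_nz[OF z th] by (simp add: field_simps)
  show ?thesis by (rule alg_R2[OF PP_nz[OF z th] r1]) (use e in simp)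
qed

end

lemma alg_R3: fixes A P I1 I2 Ic b b' m w al bb :: complex
  assumes b: "b \<noteq> 0" and m: "m \<noteq> 0" and P: "P \<noteq> 0" and i2: "I2 = A*I1/P"
    and ic: "(b*m)*Ic = I1 - A*I2" and Pd: "P = A^2 - (b*m)^2" and m2: "m^2 = -w" and bb: "b*b' = bb"
  shows "- al*I2 - (b'*m)*Ic = (-al*A - w*bb) * I1 / P"
proof -
  have ic': "Ic = (I1 - A*I2)/(b*m)" using ic b m by (simp add: field_simps)
  have "(b'*m)*Ic = (b'/b)*(I1 - A*I2)" unfolding ic' using b m by (simp add: field_simps)
  also have "I1 - A*I2 = I1*(P - A^2)/P" unfolding i2 using P by (simp add: field_simps power2_eq_square)
  also have "P - A^2 = - (b^2*m^2)" unfolding Pd by (simp add: power_mult_distrib)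
  also have "(b'/b)*(I1 * (- (b^2*m^2)) / P) = - (b*b')*m^2*I1/P" using b by (simp add: field_simps power2_eq_square)
  finally have "(b'*m)*Ic = w*bb*I1/P" unfolding m2 bb by simp
  thus ?thesis unfolding i2 using P by (simp add: field_simps)
qed

definition PPd :: "complex \<Rightarrow> complex \<Rightarrow> complex \<Rightarrow> complex \<Rightarrow> complex \<Rightarrow> complex" where
  "PPd a v w z x = 2 * (z - a + v * x^2) * (2 * v * x) + 4 * w * (2 * x - 4 * x^3)"

lemma bet_bet': assumes "0 < \<theta>" "\<theta> < 1" shows "bet \<theta> * bet' \<theta> = 4*\<theta> - 8*\<theta>^3"
proof -
  have p: "0 < 1 - \<theta>^2" using assms by (simp add: abs_square_less_1 abs_less_iff)
  hence s: "sqrt (1 - \<theta>^2) ^ 2 = 1 - \<theta>^2" by simp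
  have "sqrt (1 - \<theta>^2) \<noteq> 0" using p by simp
  thus ?thesis unfolding bet_def bet'_def using s by (simp add: field_simps power2_eq_square power3_eq_cube)
qed

context good begin

lemma R3':
  assumes z: "z \<in> U" and th: "0 < \<theta>" "\<theta> < 1" and w0: "w \<noteq> 0"
  shows "((\<lambda>\<theta>. II a v w 1 z \<theta>) has_vector_derivative
     (- PPd a v w z (of_real \<theta>) / (2 * PPp a v w z (of_real \<theta>)) * II a v w 1 z \<theta>)) (at \<theta>)"
proof -
  have th': "0 \<le> \<theta>" "\<theta> \<le> 1" using th by auto
  define m where "m = csqrt (-w)"
  have m0: "m \<noteq> 0" using w0 by (simp add: m_def)
  have m2: "m^2 = -w" by (simp add: m_def)
  have b0: "complex_of_real (bet \<theta>) \<noteq> 0"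
  proof -
    have "0 < 1 - \<theta>^2" using th by (simp add: abs_square_less_1 abs_less_iff)
    thus ?thesis unfolding bet_def using th by simp
  qed
  define Ic where "Ic = integral {0..pi} (\<lambda>t. of_real (cos t) * kk a v w z \<theta> t ^ 2)"
  have ci: "continuous_on {0..pi} (\<lambda>t. kk a v w z \<theta> t ^ n)" for n by (rule ci_kk[OF z th'])
  have i2: "(\<lambda>t. kk a v w z \<theta> t ^ 2) integrable_on {0..pi}" by (rule integrable_continuous_real[OF ci])
  have ic2: "(\<lambda>t. of_real (cos t) * kk a v w z \<theta> t ^ 2) integrable_on {0..pi}"
    by (rule integrable_continuous_real) (intro continuous_intros ci)
  have X: "integral {0..pi} (\<lambda>t. - (v * (2 * of_real \<theta>) + of_real (bet' \<theta> * cos t) * csqrt (-w)) * kk a v w z \<theta> t ^ 2)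
      = - (v * (2 * of_real \<theta>)) * II a v w 2 z \<theta> - (of_real (bet' \<theta>) * m) * Ic"
  proof -
    have "(\<lambda>t. - (v * (2 * of_real \<theta>) + of_real (bet' \<theta> * cos t) * csqrt (-w)) * kk a v w z \<theta> t ^ 2)
        = (\<lambda>t. - (v * (2 * of_real \<theta>)) * kk a v w z \<theta> t ^ 2 - (of_real (bet' \<theta>) * m) * (of_real (cos t) * kk a v w z \<theta> t ^ 2))"
      by (simp add: fun_eq_iff algebra_simps m_def)
    thus ?thesis unfolding Ic_def II_def
      by (simp only: integral_diff[OF integrable_on_mult_right[OF i2] integrable_on_mult_right[OF ic2]] integral_mult_right)
  qed
  have P: "AA a v z \<theta>^2 - BB w \<theta>^2 \<noteq> 0" by (rule PP_nz[OF z th'])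
  have r1: "II a v w 2 z \<theta> = AA a v z \<theta> * II a v w 1 z \<theta> / (AA a v z \<theta>^2 - BB w \<theta>^2)"
    using R1[OF z th'] P by (simp add: field_simps)
  have rc: "(of_real (bet \<theta>) * m) * Ic = II a v w 1 z \<theta> - AA a v z \<theta> * II a v w 2 z \<theta>"
    using R_cos[OF z th'] unfolding Ic_def BB_def m_def .
  have bb: "of_real (bet \<theta>) * of_real (bet' \<theta>) = (of_real (4*\<theta> - 8*\<theta>^3) :: complex)"
    unfolding bet_bet'[OF th, symmetric] by simp
  have Pd: "AA a v z \<theta>^2 - BB w \<theta>^2 = AA a v z \<theta>^2 - (of_real (bet \<theta>) * m)^2" unfolding BB_def m_def ..
  have val: "- (v * (2 * of_real \<theta>)) * II a v w 2 z \<theta> - (of_real (bet' \<theta>) * m) * Ic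
      = (- (v * (2 * of_real \<theta>)) * AA a v z \<theta> - w * of_real (4*\<theta> - 8*\<theta>^3)) * II a v w 1 z \<theta> / (AA a v z \<theta>^2 - BB w \<theta>^2)"
    by (rule alg_R3[OF b0 m0 P r1 rc Pd m2 bb])
  have eqE: "- (v * (2 * of_real \<theta>)) * AA a v z \<theta> - w * of_real (4*\<theta> - 8*\<theta>^3) = - PPd a v w z (of_real \<theta>) / 2"
    unfolding PPd_def AA_def by (simp add: field_simps power3_eq_cube power2_eq_square)
  have "integral {0..pi} (\<lambda>t. - (v * (2 * of_real \<theta>) + of_real (bet' \<theta> * cos t) * csqrt (-w)) * kk a v w z \<theta> t ^ 2)
      = - PPd a v w z (of_real \<theta>) / (2 * PPp a v w z (of_real \<theta>)) * II a v w 1 z \<theta>"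
    unfolding X val PP_eq[OF th'] eqE by (simp add: field_simps)
  with R3[OF z th] show ?thesis by simp
qed

end

definition r0f :: "complex \<Rightarrow> complex \<Rightarrow> complex \<Rightarrow> complex" where
  "r0f v w u = (v * u^2 + 4 * w * u - u^3) / 4"
definition r2f :: "complex \<Rightarrow> complex \<Rightarrow> complex \<Rightarrow> complex" where
  "r2f v w u = 0 - (3 * u + v) * (v^2 - 4 * w) / 4"
definition r1f :: "complex \<Rightarrow> complex \<Rightarrow> complex \<Rightarrow> complex" where
  "r1f v w u = 0 - (u + v)^3/4 - r0f v w u - r2f v w u"
definition RRf :: "complex \<Rightarrow> complex \<Rightarrow> complex \<Rightarrow> complex \<Rightarrow> complex \<Rightarrow> complex \<Rightarrow> complex" where
  "RRf a v w c z y = c * (r0f v w (z - a) + r1f v w (z - a) * y^2 + r2f v w (z - a) * y^4)"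
definition RRd :: "complex \<Rightarrow> complex \<Rightarrow> complex \<Rightarrow> complex \<Rightarrow> complex \<Rightarrow> complex \<Rightarrow> complex" where
  "RRd a v w c z y = c * (2 * r1f v w (z - a) * y + 4 * r2f v w (z - a) * y^3)"
definition Qf :: "complex \<Rightarrow> complex \<Rightarrow> complex \<Rightarrow> complex \<Rightarrow> complex" where
  "Qf v w c u = c * (u^3 + v * u^2 + w * u)"
definition Q1f :: "complex \<Rightarrow> complex \<Rightarrow> complex \<Rightarrow> complex \<Rightarrow> complex" where
  "Q1f v w c u = c * (3 * u^2 + 2 * v * u + w)"
definition Q2f :: "complex \<Rightarrow> complex \<Rightarrow> complex \<Rightarrow> complex" where
  "Q2f v c u = c * (6 * u + 2 * v)"
definition NNf :: "complex \<Rightarrow> complex \<Rightarrow> complex \<Rightarrow> complex \<Rightarrow> complex \<Rightarrow> complex \<Rightarrow> complex" where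
  "NNf a v w c z y = Qf v w c (z - a) * (3 * (z - a + v * y^2)^2 - PPp a v w z y)
     - Q1f v w c (z - a) * (z - a + v * y^2) * PPp a v w z y + Q2f v c (z - a) / 8 * (PPp a v w z y)^2"

lemma poly_ident:
  "(RRf a v w c z y + y * RRd a v w c z y) * PPp a v w z y - 3/2 * y * RRf a v w c z y * PPd a v w z y
    = NNf a v w c z y"
  unfolding RRf_def RRd_def NNf_def PPp_def PPd_def Qf_def Q1f_def Q2f_def r0f_def r1f_def r2f_def
  by (simp add: field_simps) algebra




lemma alg_F: fixes R Rd P Pd N I y :: complex
  assumes P: "P \<noteq> 0" and id: "(R + y*Rd)*P - 3/2*y*R*Pd = N"
  shows "y*R/P * (- Pd / (2*P) * I) + ((1*R + Rd*y)*P - y*R*Pd)/(P*P) * I = N/P^2 * I"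
  unfolding id[symmetric] using P by (simp add: field_simps power2_eq_square)

lemma alg_L: fixes Q Q1 Q2 A P I :: complex
  assumes P: "P \<noteq> 0"
  shows "Q*((3*A^2/P^2 - 1/P)*I) - Q1*(A*I/P) + Q2/8*I = (Q*(3*A^2 - P) - Q1*A*P + Q2/8*P^2)/P^2 * I"
  using P by (simp add: field_simps power2_eq_square)

lemma dRR: "((\<lambda>y. RRf a v w c z y) has_field_derivative RRd a v w c z y) (at y)"
proof -
  have "((\<lambda>y. RRf a v w c z y) has_field_derivative
      c * (r1f v w (z - a) * (of_nat 2 * y ^ 1) + r2f v w (z - a) * (of_nat 4 * y ^ 3))) (at y)"
    unfolding RRf_def by (auto intro!: derivative_eq_intros)
  thus ?thesis unfolding RRd_def by (simp add: algebra_simps)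
qed

lemma dPP: "((\<lambda>y. PPp a v w z y) has_field_derivative PPd a v w z y) (at y)"
  unfolding PPp_def PPd_def by (auto intro!: derivative_eq_intros) algebra

context good begin

lemma PPp_nz: assumes z: "z \<in> U" and th: "0 \<le> \<theta>" "\<theta> \<le> 1"
  shows "PPp a v w z (of_real \<theta>) \<noteq> 0"
  using PP_nz[OF z th] PP_eq[OF th] by simp

definition Phi where "Phi c z y = y * RRf a v w c z y / PPp a v w z y"

lemma F1:
  assumes z: "z \<in> U" and th: "0 < \<theta>" "\<theta> < 1" and w0: "w \<noteq> 0"
  shows "((\<lambda>\<theta>. Phi c z (of_real \<theta>) * II a v w 1 z \<theta>) has_vector_derivative
      (NNf a v w c z (of_real \<theta>) / (PPp a v w z (of_real \<theta>))^2 * II a v w 1 z \<theta>)) (at \<theta>)"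
proof -
  have th': "0 \<le> \<theta>" "\<theta> \<le> 1" using th by auto
  note Pn = PPp_nz[OF z th']
  have dPhi: "(Phi c z has_field_derivative
     ((1 * RRf a v w c z (of_real \<theta>) + RRd a v w c z (of_real \<theta>) * of_real \<theta>) * PPp a v w z (of_real \<theta>)
       - of_real \<theta> * RRf a v w c z (of_real \<theta>) * PPd a v w z (of_real \<theta>))
      / (PPp a v w z (of_real \<theta>) * PPp a v w z (of_real \<theta>))) (at (of_real \<theta>))"
    unfolding Phi_def[abs_def] by (rule DERIV_divide[OF DERIV_mult[OF DERIV_ident dRR] dPP Pn])
  note d = has_vector_derivative_mult[OF has_vector_derivative_real_field[OF dPhi] R3'[OF z th w0]]
  have e: "Phi c z (of_real \<theta>) * (- PPd a v w z (of_real \<theta>) / (2 * PPp a v w z (of_real \<theta>)) * II a v w 1 z \<theta>)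
     + ((1 * RRf a v w c z (of_real \<theta>) + RRd a v w c z (of_real \<theta>) * of_real \<theta>) * PPp a v w z (of_real \<theta>)
       - of_real \<theta> * RRf a v w c z (of_real \<theta>) * PPd a v w z (of_real \<theta>))
      / (PPp a v w z (of_real \<theta>) * PPp a v w z (of_real \<theta>)) * II a v w 1 z \<theta>
     = NNf a v w c z (of_real \<theta>) / (PPp a v w z (of_real \<theta>))^2 * II a v w 1 z \<theta>"
    unfolding Phi_def by (rule alg_F[OF Pn poly_ident])
  show ?thesis using d unfolding e .
qed

lemma F2:
  assumes z: "z \<in> U" and th: "0 \<le> \<theta>" "\<theta> \<le> 1"
  shows "Qf v w c (z - a) * (2 * II a v w 3 z \<theta>) - Q1f v w c (z - a) * II a v w 2 z \<theta>
       + Q2f v c (z - a) / 8 * II a v w 1 z \<theta>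
     = NNf a v w c z (of_real \<theta>) / (PPp a v w z (of_real \<theta>))^2 * II a v w 1 z \<theta>"
proof -
  have r1: "II a v w 2 z \<theta> = AA a v z \<theta> * II a v w 1 z \<theta> / (AA a v z \<theta>^2 - BB w \<theta>^2)"
    using R1[OF z th] PP_nz[OF z th] by (simp add: field_simps)
  show ?thesis unfolding R2[OF z th] r1 PP_eq[OF th] alg_L[OF PPp_nz[OF z th]]
    unfolding NNf_def AA_def ..
qed

end

lemma II1_at1: "II a v w 1 z 1 = of_real pi / (z - a + v)"
proof -
  have "kk a v w z 1 t = 1 / (z - a + v)" for t unfolding kk_def pt_def bet_def by simp
  thus ?thesis unfolding II_def by (simp add: scaleR_conv_of_real)
qed

context good begin

lemma F3:
  assumes z: "z \<in> U" and w0: "w \<noteq> 0"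
  shows "((\<lambda>\<theta>. NNf a v w c z (of_real \<theta>) / (PPp a v w z (of_real \<theta>))^2 * II a v w 1 z \<theta>) has_integral
           (- c * of_real pi / 4)) {0..1}"
proof -
  have P1: "PPp a v w z 1 \<noteq> 0" using PPp_nz[OF z, of 1] by simp
  hence uv: "z - a + v \<noteq> 0" unfolding PPp_def by simp
  have cont: "continuous_on {0..1} (\<lambda>\<theta>. Phi c z (of_real \<theta>) * II a v w 1 z \<theta>)"
  proof (intro continuous_on_mult cont_II_theta[OF z])
    have "continuous_on {0..1} (\<lambda>\<theta>::real. of_real \<theta> * RRf a v w c z (of_real \<theta>) / PPp a v w z (of_real \<theta>))"
      using PPp_nz[OF z] unfolding RRf_def PPp_def by (intro continuous_intros) auto
    thus "continuous_on {0..1} (\<lambda>\<theta>. Phi c z (of_real \<theta>))" unfolding Phi_def .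
  qed
  have "((\<lambda>\<theta>. NNf a v w c z (of_real \<theta>) / (PPp a v w z (of_real \<theta>))^2 * II a v w 1 z \<theta>) has_integral
       (Phi c z (of_real 1) * II a v w 1 z 1 - Phi c z (of_real 0) * II a v w 1 z 0)) {0..1}"
  proof (rule fundamental_theorem_of_calculus_interior[OF _ cont])
    fix x :: real assume "x \<in> {0<..<1}"
    hence "0 < x" "x < 1" by auto
    thus "((\<lambda>\<theta>. Phi c z (of_real \<theta>) * II a v w 1 z \<theta>) has_vector_derivative
        NNf a v w c z (of_real x) / (PPp a v w z (of_real x))^2 * II a v w 1 z x) (at x)"
      by (rule F1[OF z _ _ w0])
  qed simp
  moreover have "Phi c z (of_real 1) * II a v w 1 z 1 - Phi c z (of_real 0) * II a v w 1 z 0 = - c * of_real pi / 4"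
  proof -
    define s where "s = z - a + v"
    have s0: "s \<noteq> 0" using uv s_def by simp
    have "RRf a v w c z 1 = - c * (z - a + v)^3 / 4"
      unfolding RRf_def r1f_def by (simp add: field_simps)
    moreover have "PPp a v w z 1 = (z - a + v)^2" unfolding PPp_def by simp
    ultimately have ph1: "Phi c z (of_real 1) = - c * s^3 / 4 / s^2" unfolding Phi_def s_def by simp
    have ph0: "Phi c z (of_real 0) = 0" unfolding Phi_def by simp
    have i1: "II a v w 1 z 1 = of_real pi / s" unfolding II1_at1 s_def ..
    show ?thesis unfolding ph1 ph0 i1 using s0 by (simp add: field_simps power2_eq_square power3_eq_cube)
  qed
  ultimately show ?thesis by simp
qed

lemma ODE_JJ:
  assumes z: "z \<in> U" and w0: "w \<noteq> 0"
  shows "Qf v w c (z - a) * (2 * JJ a v w 3 z) - Q1f v w c (z - a) * JJ a v w 2 z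
       + Q2f v c (z - a) / 8 * JJ a v w 1 z = - c * of_real pi / 4"
proof -
  have h: "((\<lambda>\<theta>. Qf v w c (z - a) * (2 * II a v w 3 z \<theta>) - Q1f v w c (z - a) * II a v w 2 z \<theta>
       + Q2f v c (z - a) / 8 * II a v w 1 z \<theta>) has_integral (- c * of_real pi / 4)) {0..1}"
  proof (rule has_integral_eq[OF _ F3[OF z w0]])
    fix x :: real assume "x \<in> {0..1}"
    hence "0 \<le> x" "x \<le> 1" by auto
    thus "NNf a v w c z (of_real x) / (PPp a v w z (of_real x))^2 * II a v w 1 z x =
      Qf v w c (z - a) * (2 * II a v w 3 z x) - Q1f v w c (z - a) * II a v w 2 z x
       + Q2f v c (z - a) / 8 * II a v w 1 z x"
      by (rule F2[OF z, symmetric])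
  qed
  have i: "(\<lambda>\<theta>. II a v w n z \<theta>) integrable_on {0..1}" for n
    by (rule integrable_continuous_real[OF cont_II_theta[OF z]])
  have "integral {0..1} (\<lambda>\<theta>. Qf v w c (z - a) * (2 * II a v w 3 z \<theta>) - Q1f v w c (z - a) * II a v w 2 z \<theta>
       + Q2f v c (z - a) / 8 * II a v w 1 z \<theta>)
     = Qf v w c (z - a) * (2 * JJ a v w 3 z) - Q1f v w c (z - a) * JJ a v w 2 z
       + Q2f v c (z - a) / 8 * JJ a v w 1 z"
    unfolding JJ_def
    by (simp only: integral_add[OF integrable_diff[OF integrable_on_mult_right[OF integrable_on_mult_right[OF i]]
          integrable_on_mult_right[OF i]] integrable_on_mult_right[OF i]]
        integral_diff[OF integrable_on_mult_right[OF integrable_on_mult_right[OF i]] integrable_on_mult_right[OF i]]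
        integral_mult_right)
  with integral_unique[OF h] show ?thesis by simp
qed

end




lemma csqrt_scale: assumes r: "0 \<le> r" shows "csqrt (of_real r * z) = of_real (sqrt r) * csqrt z"
proof (cases "r = 0")
  case True thus ?thesis by simp
next
  case False
  hence r0: "0 < sqrt r" using r by simp
  show ?thesis
  proof (rule csqrt_unique)
    have "(of_real (sqrt r) :: complex)^2 = of_real r" using r by (metis of_real_power real_sqrt_pow2)
    thus "(of_real (sqrt r) * csqrt z)^2 = of_real r * z"
      by (simp add: power_mult_distrib)
    have p: "0 < Re (csqrt z) \<or> Re (csqrt z) = 0 \<and> 0 \<le> Im (csqrt z)" by (rule csqrt_principal)
    show "0 < Re (of_real (sqrt r) * csqrt z) \<or> Re (of_real (sqrt r) * csqrt z) = 0 \<and> 0 \<le> Im (of_real (sqrt r) * csqrt z)"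
      using p r0 by auto
  qed
qed

lemma two_csqrt_psi: assumes "0 \<le> \<theta>" "\<theta> \<le> 1"
  shows "2 * csqrt (- w * (1 - (of_real \<theta>)\<^sup>2) * (of_real \<theta>)\<^sup>2) = of_real (bet \<theta>) * csqrt (-w)"
proof -
  have e: "- w * (1 - (of_real \<theta>)\<^sup>2) * (of_real \<theta>)\<^sup>2 = of_real ((1 - \<theta>^2) * \<theta>^2) * (-w)"
    by (simp add: algebra_simps)
  have p: "0 \<le> (1 - \<theta>^2) * \<theta>^2" using assms by (simp add: power_le_one)
  have q: "sqrt ((1 - \<theta>^2) * \<theta>^2) = \<theta> * sqrt (1 - \<theta>^2)"
    using assms by (simp add: real_sqrt_mult)
  have "csqrt (- w * (1 - (of_real \<theta>)\<^sup>2) * (of_real \<theta>)\<^sup>2) = of_real (\<theta> * sqrt (1 - \<theta>^2)) * csqrt (-w)"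
    unfolding e csqrt_scale[OF p] q ..
  thus ?thesis unfolding bet_def by (simp add: algebra_simps)
qed

lemma emeasure_arcsine:
  assumes A[measurable]: "A \<in> sets borel"
  shows "emeasure (arcsine_measure al1 al2) A =
    (\<integral>\<^sup>+ t. ennreal (indicator {0..pi} t / pi * indicator A (al1 + of_real ((1 - cos t) / 2) * (al2 - al1))) \<partial>lborel)"
proof -
  define F where "F = (\<lambda>s::real. al1 + of_real s * (al2 - al1))"
  define D where "D = (\<lambda>s::real. ennreal (indicator {0<..<1} s / (pi * sqrt (s * (1 - s)))))"
  define h where "h = (\<lambda>s::real. indicator {0<..<1} s / (pi * sqrt (s * (1 - s))) * indicator A (F s))"
  have Fm[measurable]: "F \<in> borel_measurable borel" unfolding F_def by measurable
  have Dm[measurable]: "D \<in> borel_measurable borel" unfolding D_def by measurable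
  have "emeasure (arcsine_measure al1 al2) A = emeasure (density lborel D) (F -` A \<inter> space (density lborel D))"
    unfolding arcsine_measure_def D_def[symmetric] F_def[symmetric]
    by (rule emeasure_distr) simp_all
  also have "\<dots> = (\<integral>\<^sup>+ s. D s * indicator (F -` A) s \<partial>lborel)"
    by (subst emeasure_density) (simp_all add: measurable_sets[OF Fm A, simplified])
  also have "\<dots> = (\<integral>\<^sup>+ s. ennreal (h s * indicator {0..1} s) \<partial>lborel)"
    by (intro nn_integral_cong) (auto simp: D_def h_def indicator_def)
  also have "\<dots> = (\<integral>\<^sup>+ s. ennreal (h s * indicator {(1 - cos 0)/2..(1 - cos pi)/2} s) \<partial>lborel)"
    by simp
  also have "\<dots> = (\<integral>\<^sup>+ t. ennreal (h ((1 - cos t)/2) * (sin t / 2) * indicator {0..pi} t) \<partial>lborel)"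
  proof (rule nn_integral_substitution[where g="\<lambda>t. (1 - cos t)/2" and g'="\<lambda>t. sin t / 2"])
    show "set_borel_measurable borel {(1 - cos 0) / 2..(1 - cos pi) / 2} h"
      unfolding set_borel_measurable_def h_def by measurable
    show "((\<lambda>t. (1 - cos t) / 2) has_real_derivative sin x / 2) (at x)" for x
      by (auto intro!: derivative_eq_intros)
    show "continuous_on {0..pi} (\<lambda>t. sin t / 2)" by (intro continuous_intros) auto
    show "0 \<le> sin x / 2" if "x \<in> {0..pi}" for x using that by (simp add: sin_ge_zero)
  qed simp
  also have "\<dots> = (\<integral>\<^sup>+ t. ennreal (indicator {0..pi} t / pi * indicator A (al1 + of_real ((1 - cos t) / 2) * (al2 - al1))) \<partial>lborel)"
  proof (rule nn_integral_cong_AE)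
    have "AE t in lborel. t \<noteq> 0" "AE t in lborel. t \<noteq> pi" by (rule AE_lborel_singleton)+
    thus "AE t in lborel. ennreal (h ((1 - cos t)/2) * (sin t / 2) * indicator {0..pi} t) =
       ennreal (indicator {0..pi} t / pi * indicator A (al1 + of_real ((1 - cos t) / 2) * (al2 - al1)))"
    proof eventually_elim
      case (elim t)
      show ?case
      proof (cases "t \<in> {0..pi}")
        case False thus ?thesis by simp
      next
        case True
        hence t: "0 < t" "t < pi" using elim by auto
        have st: "0 < sin t" using t by (rule sin_gt_zero)
        have "cos t ^ 2 < 1" using st sin_squared_eq[of t] by (smt (verit) zero_less_power)
        hence ct: "-1 < cos t" "cos t < 1" by (auto simp: abs_square_less_1 abs_less_iff)
        have g01: "(1 - cos t)/2 \<in> {0<..<1}" using ct by auto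
        have "(1 - cos t)/2 * (1 - (1 - cos t)/2) = (1 - (cos t)^2)/4" by (simp add: field_simps power2_eq_square)
        also have "\<dots> = (sin t / 2)^2" by (simp add: power_divide sin_squared_eq)
        finally have "(1 - cos t)/2 * (1 - (1 - cos t)/2) = (sin t / 2)^2" .
        hence sq: "sqrt ((1 - cos t)/2 * (1 - (1 - cos t)/2)) = sin t / 2" using st by simp
        have "h ((1 - cos t)/2) * (sin t / 2) * indicator {0..pi} t
           = indicator {0..pi} t / pi * indicator A (al1 + of_real ((1 - cos t) / 2) * (al2 - al1))"
          unfolding h_def F_def sq using g01 True st by (simp add: field_simps)
        thus ?thesis by simp
      qed
    qed
  qed
  finally show ?thesis .
qed


lemma fst_bm[measurable]: "(\<lambda>x. fst x :: real) \<in> borel_measurable (borel :: (real \<times> real) measure)"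
  by (intro borel_measurable_continuous_onI continuous_intros)
lemma snd_bm[measurable]: "(\<lambda>x. snd x :: real) \<in> borel_measurable (borel :: (real \<times> real) measure)"
  by (intro borel_measurable_continuous_onI continuous_intros)

lemma box_borel[measurable]: "({0..1} \<times> {0..pi} :: (real \<times> real) set) \<in> sets borel"
  by (intro borel_closed closed_Times) auto

lemma pt_measurable[measurable]: "(\<lambda>x. pt a v w (fst x) (snd x)) \<in> borel_measurable borel"
  by (intro borel_measurable_continuous_onI continuous_on_pt continuous_intros)

lemma om_pt: assumes "0 \<le> \<theta>" "\<theta> \<le> 1"
  shows "(a - v * (of_real \<theta>)\<^sup>2 - 2 * csqrt (- w * (1 - (of_real \<theta>)\<^sup>2) * (of_real \<theta>)\<^sup>2))
     + of_real ((1 - cos t) / 2) * ((a - v * (of_real \<theta>)\<^sup>2 + 2 * csqrt (- w * (1 - (of_real \<theta>)\<^sup>2) * (of_real \<theta>)\<^sup>2))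
        - (a - v * (of_real \<theta>)\<^sup>2 - 2 * csqrt (- w * (1 - (of_real \<theta>)\<^sup>2) * (of_real \<theta>)\<^sup>2)))
     = pt a v w \<theta> t"
  unfolding two_csqrt_psi[OF assms] pt_def by (simp add: field_simps)

definition Nmeas :: "complex \<Rightarrow> complex \<Rightarrow> complex \<Rightarrow> complex measure" where
  "Nmeas a v w = distr (density lborel (\<lambda>x::real \<times> real. ennreal (indicator ({0..1} \<times> {0..pi}) x / pi)))
      borel (\<lambda>x. pt a v w (fst x) (snd x))"

lemma M_eq: "M_meas a v w = Nmeas a v w"
proof -
  define om where "om = (\<lambda>\<theta>. let xi = a - v * (of_real \<theta>)\<^sup>2; psi = - w * (1 - (of_real \<theta>)\<^sup>2) * (of_real \<theta>)\<^sup>2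
        in arcsine_measure (xi - 2 * csqrt psi) (xi + 2 * csqrt psi))"
  have sN: "sets (Nmeas a v w) = sets borel" "space (Nmeas a v w) = UNIV" unfolding Nmeas_def by simp_all
  have "Nmeas a v w = measure_of UNIV (sets borel) (emeasure (Nmeas a v w))"
    using measure_of_of_measure[of "Nmeas a v w"] unfolding sN by simp
  moreover have "M_meas a v w = measure_of UNIV (sets borel)
       (\<lambda>A. \<integral>\<^sup>+ \<theta>. indicator {0..1} \<theta> * emeasure (om \<theta>) A \<partial>lborel)"
    unfolding M_meas_def mixture_measure_def om_def ..
  moreover have "measure_of UNIV (sets borel) (\<lambda>A. \<integral>\<^sup>+ \<theta>. indicator {0..1} \<theta> * emeasure (om \<theta>) A \<partial>lborel)
      = measure_of UNIV (sets borel) (emeasure (Nmeas a v w))"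
  proof (rule measure_of_eq)
    show "sets borel \<subseteq> Pow UNIV" by simp
    fix A :: "complex set" assume A0: "A \<in> sigma_sets UNIV (sets borel)"
    have "sigma_sets UNIV (sets borel) = sets (borel :: complex measure)" using sets.sigma_sets_eq[of borel] by simp
    with A0 have A[measurable]: "A \<in> sets borel" by blast
    define f where "f = (\<lambda>x::real \<times> real. ennreal (indicator {0..1} (fst x) * (indicator {0..pi} (snd x) / pi * indicator A (pt a v w (fst x) (snd x)))))"
    have fm: "f \<in> borel_measurable (lborel \<Otimes>\<^sub>M lborel)" unfolding lborel_prod f_def measurable_lborel2 by measurable
    have "(\<integral>\<^sup>+ \<theta>. indicator {0..1} \<theta> * emeasure (om \<theta>) A \<partial>lborel) = (\<integral>\<^sup>+ \<theta>. \<integral>\<^sup>+ t. f (\<theta>, t) \<partial>lborel \<partial>lborel)"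
    proof (rule nn_integral_cong)
      fix \<theta> :: real
      show "indicator {0..1} \<theta> * emeasure (om \<theta>) A = (\<integral>\<^sup>+ t. f (\<theta>, t) \<partial>lborel)"
      proof (cases "\<theta> \<in> {0..1}")
        case False thus ?thesis unfolding f_def by simp
      next
        case True
        hence th: "0 \<le> \<theta>" "\<theta> \<le> 1" by auto
        show ?thesis unfolding f_def om_def Let_def emeasure_arcsine[OF A] om_pt[OF th] using True by simp
      qed
    qed
    also have "\<dots> = integral\<^sup>N (lborel \<Otimes>\<^sub>M lborel) f" by (rule lborel.nn_integral_fst[OF fm])
    also have "\<dots> = integral\<^sup>N lborel f" unfolding lborel_prod ..
    also have "\<dots> = emeasure (Nmeas a v w) A"
    proof -
      have "emeasure (Nmeas a v w) A = emeasure (density lborel (\<lambda>x::real \<times> real. ennreal (indicator ({0..1} \<times> {0..pi}) x / pi)))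
          ((\<lambda>x. pt a v w (fst x) (snd x)) -` A \<inter> space (density lborel (\<lambda>x::real \<times> real. ennreal (indicator ({0..1} \<times> {0..pi}) x / pi))))"
        unfolding Nmeas_def by (rule emeasure_distr) simp_all
      also have "\<dots> = (\<integral>\<^sup>+ x. ennreal (indicator ({0..1} \<times> {0..pi}) x / pi) * indicator ((\<lambda>x. pt a v w (fst x) (snd x)) -` A) x \<partial>lborel)"
      proof (subst emeasure_density)
        show "(\<lambda>x::real \<times> real. ennreal (indicator ({0..1} \<times> {0..pi}) x / pi)) \<in> borel_measurable lborel"
          unfolding measurable_lborel2 by measurable
      qed (simp_all add: measurable_sets[OF pt_measurable A, simplified])
      also have "\<dots> = integral\<^sup>N lborel f"
        by (intro nn_integral_cong) (auto simp: f_def indicator_def)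
      finally show ?thesis ..
    qed
    finally show "(\<integral>\<^sup>+ \<theta>. indicator {0..1} \<theta> * emeasure (om \<theta>) A \<partial>lborel) = emeasure (Nmeas a v w) A" .
  qed
  ultimately show ?thesis by simp
qed


lemma (in good) CT_eq':
  assumes z: "z \<in> U"
  shows "cauchy_transform (M_meas a v w) z = JJ a v w 1 z / of_real pi"
proof -
  define G where "G = (\<lambda>x::real \<times> real. indicator ({0..1} \<times> {0..pi}) x / pi)"
  define h where "h = (\<lambda>x::real \<times> real. (1 / pi) *\<^sub>R (1 / (z - pt a v w (fst x) (snd x))))"
  have box: "({0..1} \<times> {0..pi} :: (real \<times> real) set) = cbox (0,0) (1,pi)"
    by (simp add: cbox_Pair_eq)
  have nzb: "z - pt a v w (fst x) (snd x) \<noteq> 0" if "x \<in> cbox (0,0) (1,pi)" for x :: "real \<times> real"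
  proof -
    have "0 \<le> fst x" "fst x \<le> 1" using that by (auto simp: cbox_Pair_eq)
    thus ?thesis using nz[OF z] by simp
  qed
  have ch: "continuous_on (cbox (0,0) (1,pi)) h"
    unfolding h_def by (intro continuous_intros continuous_on_pt ballI nzb)
  have Gm[measurable]: "G \<in> borel_measurable borel" unfolding G_def by measurable
  have "cauchy_transform (M_meas a v w) z = integral\<^sup>L (Nmeas a v w) (\<lambda>\<xi>. 1 / (z - \<xi>))"
    unfolding cauchy_transform_def M_eq ..
  also have "\<dots> = integral\<^sup>L (density lborel (\<lambda>x. ennreal (G x))) (\<lambda>x. 1 / (z - pt a v w (fst x) (snd x)))"
    unfolding Nmeas_def G_def by (rule integral_distr) measurable
  also have "\<dots> = integral\<^sup>L lborel (\<lambda>x. G x *\<^sub>R (1 / (z - pt a v w (fst x) (snd x))))"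
    by (rule integral_density) (auto simp: G_def)
  also have "\<dots> = integral\<^sup>L lborel (\<lambda>x. indicator (cbox (0,0) (1,pi)) x *\<^sub>R h x)"
    unfolding box[symmetric] by (intro Bochner_Integration.integral_cong) (auto simp: G_def h_def indicator_def)
  also have "\<dots> = integral (cbox (0,0) (1,pi)) h"
    using set_borel_integral_eq_integral(2)[OF borel_integrable_compact[OF compact_cbox ch, folded set_integrable_def]]
    unfolding set_lebesgue_integral_def .
  also have "\<dots> = integral (cbox 0 1) (\<lambda>\<theta>. integral (cbox 0 pi) (\<lambda>t. h (\<theta>, t)))"
    by (rule integral_prod_continuous[OF ch])
  also have "\<dots> = JJ a v w 1 z / of_real pi"
    unfolding JJ_def II_def h_def kk_def by (simp add: scaleR_conv_of_real divide_inverse)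
  finally show ?thesis .
qed

lemma CT_eq: assumes "good a v w U" "z \<in> U"
  shows "cauchy_transform (M_meas a v w) z = JJ a v w 1 z / of_real pi"
  by (rule good.CT_eq'[OF assms])




lemma poly_derivs:
  fixes Q :: "complex poly"
  assumes Qz: "\<And>z. poly Q z = Qf v w c (z - a)"
  shows "poly (pderiv Q) z = Q1f v w c (z - a)" "poly (pderiv (pderiv Q)) z = Q2f v c (z - a)"
    "poly (pderiv (pderiv (pderiv Q))) z = 6 * c"
proof -
  have d1: "poly (pderiv Q) y = Q1f v w c (y - a)" for y
  proof -
    have "((\<lambda>z. Qf v w c (z - a)) has_field_derivative Q1f v w c (y - a)) (at y)"
      unfolding Qf_def Q1f_def by (auto intro!: derivative_eq_intros simp: algebra_simps power2_eq_square)
    moreover have "((\<lambda>z. Qf v w c (z - a)) has_field_derivative poly (pderiv Q) y) (at y)"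
      using poly_DERIV[of Q y] unfolding Qz .
    ultimately show ?thesis by (rule DERIV_unique[rotated])
  qed
  have d2: "poly (pderiv (pderiv Q)) y = Q2f v c (y - a)" for y
  proof -
    have "((\<lambda>z. Q1f v w c (z - a)) has_field_derivative Q2f v c (y - a)) (at y)"
      unfolding Q1f_def Q2f_def by (auto intro!: derivative_eq_intros simp: algebra_simps)
    moreover have "((\<lambda>z. Q1f v w c (z - a)) has_field_derivative poly (pderiv (pderiv Q)) y) (at y)"
      using poly_DERIV[of "pderiv Q" y] unfolding d1 .
    ultimately show ?thesis by (rule DERIV_unique[rotated])
  qed
  have d3: "poly (pderiv (pderiv (pderiv Q))) y = 6 * c" for y
  proof -
    have "((\<lambda>z. Q2f v c (z - a)) has_field_derivative 6 * c) (at y)"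
      unfolding Q2f_def by (auto intro!: derivative_eq_intros)
    moreover have "((\<lambda>z. Q2f v c (z - a)) has_field_derivative poly (pderiv (pderiv (pderiv Q))) y) (at y)"
      using poly_DERIV[of "pderiv (pderiv Q)" y] unfolding d2 .
    ultimately show ?thesis by (rule DERIV_unique[rotated])
  qed
  show "poly (pderiv Q) z = Q1f v w c (z - a)" "poly (pderiv (pderiv Q)) z = Q2f v c (z - a)"
    "poly (pderiv (pderiv (pderiv Q))) z = 6 * c" using d1 d2 d3 by auto
qed

lemma main_core:
  fixes Q :: "complex poly" and ai b d c v w :: complex
  assumes b0: "b \<noteq> 0" and d0: "d \<noteq> 0" and c0: "c \<noteq> 0"
    and Qz: "\<And>z. poly Q z = c * ((z - ai) ^ 3 + v * (z - ai)\<^sup>2 + w * (z - ai))"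
    and v: "v = -(b+d)" and w: "w = b*d"
  defines "U \<equiv> {z. cmod (z - (ai+b)) + cmod (z - (ai+d)) > cmod b + cmod d}"
  shows "cauchy_transform (M_meas ai v w) holomorphic_on U
       \<and> (\<forall>z\<in>U.
            poly Q z * deriv (deriv (cauchy_transform (M_meas ai v w))) z
            + poly (pderiv Q) z * deriv (cauchy_transform (M_meas ai v w)) z
            + poly (pderiv (pderiv Q)) z / 8 * cauchy_transform (M_meas ai v w) z
            + poly (pderiv (pderiv (pderiv Q))) z / 24 = 0)"
proof -
  have w0: "w \<noteq> 0" using b0 d0 w by simp
  have oU: "open U" unfolding U_def by (intro open_Collect_less continuous_intros)
  have G: "good ai v w U"
  proof
    show "open U" by (rule oU)
    fix z and \<theta> t :: real assume z: "z \<in> U" and th: "0 \<le> \<theta>" "\<theta> \<le> 1"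
    show "z \<noteq> pt ai v w \<theta> t"
    proof
      assume "z = pt ai v w \<theta> t"
      with pt_in_ellipse[OF v w th, of ai t] z show False unfolding U_def by simp
    qed
  qed
  interpret good ai v w U by (rule G)
  define CT where "CT = cauchy_transform (M_meas ai v w)"
  have CTe: "\<And>z. z \<in> U \<Longrightarrow> CT z = JJ ai v w 1 z / of_real pi" unfolding CT_def by (rule CT_eq[OF G])
  have dJ: "\<And>z n. z \<in> U \<Longrightarrow> ((\<lambda>z. JJ ai v w n z / of_real pi) has_field_derivative (- of_nat n * JJ ai v w (Suc n) z / of_real pi)) (at z)"
    by (rule DERIV_cdivide[OF has_deriv_JJ])
  have dCT: "\<And>z. z \<in> U \<Longrightarrow> (CT has_field_derivative (- JJ ai v w 2 z / of_real pi)) (at z)"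
  proof -
    fix z assume z: "z \<in> U"
    have "((\<lambda>z. JJ ai v w 1 z / of_real pi) has_field_derivative (- of_nat 1 * JJ ai v w (Suc 1) z / of_real pi)) (at z)"
      by (rule dJ[OF z])
    hence "((\<lambda>z. JJ ai v w 1 z / of_real pi) has_field_derivative (- JJ ai v w 2 z / of_real pi)) (at z)" by (simp add: numeral_2_eq_2)
    thus "(CT has_field_derivative (- JJ ai v w 2 z / of_real pi)) (at z)"
      by (rule has_field_derivative_transform_within_open[OF _ oU z]) (simp add: CTe)
  qed
  have hol: "CT holomorphic_on U"
    unfolding holomorphic_on_def field_differentiable_def
    using dCT by (blast intro: has_field_derivative_at_within)
  have ode: "poly Q z * deriv (deriv CT) z + poly (pderiv Q) z * deriv CT z
      + poly (pderiv (pderiv Q)) z / 8 * CT z + poly (pderiv (pderiv (pderiv Q))) z / 24 = 0" if z: "z \<in> U" for z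
  proof -
    have Qz': "\<And>z. poly Q z = Qf v w c (z - ai)" unfolding Qf_def Qz by simp
    note pd = poly_derivs[OF Qz', of z]
    have d1: "deriv CT z = - JJ ai v w 2 z / of_real pi" by (rule DERIV_imp_deriv[OF dCT[OF z]])
    have ev: "eventually (\<lambda>y. deriv CT y = - JJ ai v w 2 y / of_real pi) (nhds z)"
      using eventually_nhds_in_open[OF oU z] by eventually_elim (rule DERIV_imp_deriv[OF dCT])
    have "deriv (deriv CT) z = deriv (\<lambda>y. - JJ ai v w 2 y / of_real pi) z"
      by (rule deriv_cong_ev[OF ev refl])
    also have "\<dots> = 2 * JJ ai v w 3 z / of_real pi"
    proof (rule DERIV_imp_deriv)
      have "((\<lambda>y. - (JJ ai v w 2 y / of_real pi)) has_field_derivative - (- of_nat 2 * JJ ai v w (Suc 2) z / of_real pi)) (at z)"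
        by (rule DERIV_minus[OF dJ[OF z]])
      thus "((\<lambda>y. - JJ ai v w 2 y / of_real pi) has_field_derivative 2 * JJ ai v w 3 z / of_real pi) (at z)"
        by (simp add: numeral_3_eq_3)
    qed
    finally have d2: "deriv (deriv CT) z = 2 * JJ ai v w 3 z / of_real pi" .
    have o: "Qf v w c (z - ai) * (2 * JJ ai v w 3 z) - Q1f v w c (z - ai) * JJ ai v w 2 z
       + Q2f v c (z - ai) / 8 * JJ ai v w 1 z = - c * of_real pi / 4" by (rule ODE_JJ[OF z w0])
    have pi0: "(of_real pi :: complex) \<noteq> 0" by simp
    have "poly Q z * deriv (deriv CT) z + poly (pderiv Q) z * deriv CT z
      + poly (pderiv (pderiv Q)) z / 8 * CT z + poly (pderiv (pderiv (pderiv Q))) z / 24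
      = (Qf v w c (z - ai) * (2 * JJ ai v w 3 z) - Q1f v w c (z - ai) * JJ ai v w 2 z
       + Q2f v c (z - ai) / 8 * JJ ai v w 1 z) / of_real pi + c / 4"
      unfolding d1 d2 CTe[OF z] pd Qz' by (simp add: field_simps)
    also have "\<dots> = 0" unfolding o using pi0 by (simp add: field_simps)
    finally show ?thesis .
  qed
  show ?thesis using hol ode unfolding CT_def by blast
qed

theorem theorem1p6:
  fixes Q :: "complex poly" and a :: "nat \<Rightarrow> complex" and i j k :: nat
    and c v w :: complex
  assumes "degree Q = 3"
    and "inj_on a {1,2,3}"
    and "\<And>m. m \<in> {1,2,3} \<Longrightarrow> poly Q (a m) = 0"
    and "{i, j, k} = {1,2,3}"
    and "c \<noteq> 0"
    and "\<And>z. poly Q z = c * ((z - a i) ^ 3 + v * (z - a i)\<^sup>2 + w * (z - a i))"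
  shows "cauchy_transform (M_meas (a i) v w) holomorphic_on
           {z. cmod (z - a j) + cmod (z - a k) > cmod (a i - a j) + cmod (a i - a k)}
       \<and> (\<forall>z. cmod (z - a j) + cmod (z - a k) > cmod (a i - a j) + cmod (a i - a k) \<longrightarrow>
            poly Q z * deriv (deriv (cauchy_transform (M_meas (a i) v w))) z
            + poly (pderiv Q) z * deriv (cauchy_transform (M_meas (a i) v w)) z
            + poly (pderiv (pderiv Q)) z / 8 * cauchy_transform (M_meas (a i) v w) z
            + poly (pderiv (pderiv (pderiv Q))) z / 24 = 0)"
proof -
  have ijk: "i \<in> {1,2,3}" "j \<in> {1,2,3}" "k \<in> {1,2,3}" using assms(4) by auto
  have "card {i, j, k} = 3" using assms(4) by simp
  hence dist: "i \<noteq> j" "i \<noteq> k" "j \<noteq> k" by (auto simp: card_insert_if split: if_splits)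
  define b where "b = a j - a i"
  define d where "d = a k - a i"
  have b0: "b \<noteq> 0" unfolding b_def using inj_onD[OF assms(2), of j i] dist ijk by auto
  have d0: "d \<noteq> 0" unfolding d_def using inj_onD[OF assms(2), of k i] dist ijk by auto
  have bd: "b \<noteq> d" unfolding b_def d_def using inj_onD[OF assms(2), of j k] dist ijk by auto
  have eb: "c * (b * (b^2 + v * b + w)) = 0" using assms(3)[of j] ijk assms(6)[of "a j"] unfolding b_def
    by (simp add: power2_eq_square power3_eq_cube algebra_simps)
  have ed: "c * (d * (d^2 + v * d + w)) = 0" using assms(3)[of k] ijk assms(6)[of "a k"] unfolding d_def
    by (simp add: power2_eq_square power3_eq_cube algebra_simps)
  have eb': "b^2 + v * b + w = 0" using eb b0 assms(5) by simp
  have ed': "d^2 + v * d + w = 0" using ed d0 assms(5) by simp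
  have "(b - d) * (b + d + v) = 0" using eb' ed'
    by (simp add: power2_eq_square algebra_simps) (metis add_diff_cancel_left' diff_add_cancel)
  hence h0: "b + d + v = 0" using bd by simp
  have "v = (b + d + v) - (b + d)" by simp
  hence v: "v = -(b + d)" unfolding h0 by simp
  have w: "w = b * d" using eb' unfolding v by (simp add: power2_eq_square algebra_simps)
  have aj: "a j = a i + b" "a k = a i + d" unfolding b_def d_def by simp_all
  have nb: "cmod (a i - a j) = cmod b" "cmod (a i - a k) = cmod d"
    unfolding b_def d_def by (simp_all add: norm_minus_commute)
  from main_core[OF b0 d0 assms(5) assms(6) v w]
  show ?thesis unfolding aj(1)[symmetric] aj(2)[symmetric] nb by simp
qed


end
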